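(* Let $0\le\lambda<n$ and $1\le p<\infty$. Each of the subsets $V_0L^{p,\lambda}$, $V_\infty L^{p,\lambda}$ and $V^{(\ast)}L^{p,\lambda}$ is closed in $L^{p,\lambda}(\mathbb{R}^n)$; consequently $V^{(\ast)}_{0,\infty}L^{p,\lambda}$ is closed in $L^{p,\lambda}(\mathbb{R}^n)$.
   Context: $B(x,r)$ is the open ball in $\mathbb{R}^n$ with center $x$ and radius $r$. For $f\in L^1_{\mathrm{loc}}(\mathbb{R}^n)$ let $\mathfrak{M}_{p,\lambda}(f;x,r):=r^{-\lambda}\int_{B(x,r)}|f(y)|^p\,dy$. The homogeneous Morrey space $L^{p,\lambda}(\mathbb{R}^n)$ is the Banach space of $f\in L^p_{\mathrm{loc}}(\mathbb{R}^n)$ with $\|f\|_{p,\lambda}:=\sup_{x\in\mathbb{R}^n,\,r>0}\mathfrak{M}_{p,\lambda}(f;x,r)^{1/p}<\infty$. Define the subsets of $L^{p,\lambda}(\mathbb{R}^n)$: $V_0L^{p,\lambda}=\{f:\lim_{r\to0}\sup_{x}\mathfrak{M}_{p,\lambda}(f;x,r)=0\}$; $V_\infty L^{p,\lambda}=\{f:\lim_{r\to\infty}\sup_{x}\mathfrak{M}_{p,\lambda}(f;x,r)=0\}$; $V^{(\ast)}L^{p,\lambda}=\{f:\lim_{N\to\infty}\mathcal{A}_{N,p}(f)=0\}$, where $\mathcal{A}_{N,p}(f):=\sup_{x\in\mathbb{R}^n}\int_{B(x,1)}|f(y)|^p\chi_{\mathbb{R}^n\setminus B(0,N)}(y)\,dy$,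 $N\in\mathbb{N}$. Finally $V^{(\ast)}_{0,\infty}L^{p,\lambda}:=V_0L^{p,\lambda}\cap V_\infty L^{p,\lambda}\cap V^{(\ast)}L^{p,\lambda}$. *)

theory Defs
  imports "HOL-Analysis.Analysis"
begin

definition morrey_M :: "real \<Rightarrow> real \<Rightarrow> ('a::euclidean_space \<Rightarrow> real) \<Rightarrow> 'a \<Rightarrow> real \<Rightarrow> ennreal" where
  "morrey_M p lam f x r =
     ennreal (r powr (- lam)) * (\<integral>\<^sup>+ y. ennreal (\<bar>f y\<bar> powr p) * indicator (ball x r) y \<partial>lebesgue)"

definition morrey_sup :: "real \<Rightarrow> real \<Rightarrow> ('a::euclidean_space \<Rightarrow> real) \<Rightarrow> ennreal" where
  "morrey_sup p lam f = (SUP x\<in>UNIV. SUP r\<in>{0<..}. morrey_M p lam f x r)"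

text \<open>The homogeneous Morrey space L^{p,lambda}.  Finiteness of the supremum forces
  f to be locally p-integrable.\<close>
definition morrey_space :: "real \<Rightarrow> real \<Rightarrow> ('a::euclidean_space \<Rightarrow> real) set" where
  "morrey_space p lam = {f. f \<in> borel_measurable lebesgue \<and> morrey_sup p lam f < \<infinity>}"

definition morrey_norm :: "real \<Rightarrow> real \<Rightarrow> ('a::euclidean_space \<Rightarrow> real) \<Rightarrow> real" where
  "morrey_norm p lam f = enn2real (morrey_sup p lam f) powr (1 / p)"

definition V0_morrey :: "real \<Rightarrow> real \<Rightarrow> ('a::euclidean_space \<Rightarrow> real) set" where
  "V0_morrey p lam = {f \<in> morrey_space p lam.
     ((\<lambda>r. SUP x\<in>UNIV. morrey_M p lam f x r) \<longlongrightarrow> 0) (at_right 0)}"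

definition Vinf_morrey :: "real \<Rightarrow> real \<Rightarrow> ('a::euclidean_space \<Rightarrow> real) set" where
  "Vinf_morrey p lam = {f \<in> morrey_space p lam.
     ((\<lambda>r. SUP x\<in>UNIV. morrey_M p lam f x r) \<longlongrightarrow> 0) at_top}"

definition morrey_A :: "real \<Rightarrow> ('a::euclidean_space \<Rightarrow> real) \<Rightarrow> nat \<Rightarrow> ennreal" where
  "morrey_A p f N = (SUP x\<in>UNIV. \<integral>\<^sup>+ y. ennreal (\<bar>f y\<bar> powr p) * indicator (ball x 1) y
                        * indicator (UNIV - ball 0 (real N)) y \<partial>lebesgue)"

definition Vstar_morrey :: "real \<Rightarrow> real \<Rightarrow> ('a::euclidean_space \<Rightarrow> real) set" where
  "Vstar_morrey p lam = {f \<in> morrey_space p lam. (morrey_A p f \<longlongrightarrow> 0) sequentially}"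

definition V0inf_star_morrey :: "real \<Rightarrow> real \<Rightarrow> ('a::euclidean_space \<Rightarrow> real) set" where
  "V0inf_star_morrey p lam = V0_morrey p lam \<inter> Vinf_morrey p lam \<inter> Vstar_morrey p lam"

text \<open>Closedness of a subset of the (semi)normed space L^{p,lambda}: limits in the Morrey
  norm of sequences from S stay in S (sequential closedness = closedness in a metric space).\<close>
definition morrey_closed :: "real \<Rightarrow> real \<Rightarrow> ('a::euclidean_space \<Rightarrow> real) set \<Rightarrow> bool" where
  "morrey_closed p lam S \<longleftrightarrow>
     (\<forall>g f. (\<forall>k. g k \<in> S) \<and> f \<in> morrey_space p lam \<and>
        ((\<lambda>k. morrey_norm p lam (\<lambda>y. g k y - f y)) \<longlongrightarrow> 0) sequentially \<longrightarrow> f \<in> S)"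

end

theory Submission imports Defs begin

lemma pw_real:
  fixes a b c p :: real
  assumes "p > 0" "\<bar>a\<bar> \<le> \<bar>b\<bar> + \<bar>c\<bar>"
  shows "\<bar>a\<bar> powr p \<le> 2 powr p * (\<bar>b\<bar> powr p + \<bar>c\<bar> powr p)"
proof -
  have "\<bar>a\<bar> powr p \<le> (2 * max \<bar>b\<bar> \<bar>c\<bar>) powr p"
    using assms by (intro powr_mono2) auto
  also have "\<dots> = 2 powr p * max \<bar>b\<bar> \<bar>c\<bar> powr p"
    by (simp add: powr_mult)
  also have "max \<bar>b\<bar> \<bar>c\<bar> powr p \<le> \<bar>b\<bar> powr p + \<bar>c\<bar> powr p"
    by (auto simp: max_def)
  hence "2 powr p * max \<bar>b\<bar> \<bar>c\<bar> powr p \<le> 2 powr p * (\<bar>b\<bar> powr p + \<bar>c\<bar> powr p)"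
    by (intro mult_left_mono) auto
  finally show ?thesis .
qed

lemma pw_enn:
  fixes a b c p :: real and J :: ennreal
  assumes "p > 0" "\<bar>a\<bar> \<le> \<bar>b\<bar> + \<bar>c\<bar>"
  shows "ennreal (\<bar>a\<bar> powr p) * J \<le> ennreal (2 powr p) * (ennreal (\<bar>b\<bar> powr p) * J + ennreal (\<bar>c\<bar> powr p) * J)"
proof -
  have "ennreal (\<bar>a\<bar> powr p) \<le> ennreal (2 powr p * (\<bar>b\<bar> powr p + \<bar>c\<bar> powr p))"
    using pw_real[OF assms] by (rule ennreal_leI)
  also have "\<dots> = ennreal (2 powr p) * (ennreal (\<bar>b\<bar> powr p) + ennreal (\<bar>c\<bar> powr p))"
    by (simp add: ennreal_mult ennreal_plus)
  finally have "ennreal (\<bar>a\<bar> powr p) * J \<le> ennreal (2 powr p) * (ennreal (\<bar>b\<bar> powr p) + ennreal (\<bar>c\<bar> powr p)) * J"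
    by (rule mult_right_mono) simp
  thus ?thesis by (simp add: algebra_simps)
qed

lemma int_bound:
  fixes u v w :: "'a::euclidean_space \<Rightarrow> real" and J :: "'a \<Rightarrow> ennreal"
  assumes "p > 0" "u \<in> borel_measurable lebesgue" "v \<in> borel_measurable lebesgue"
    "J \<in> borel_measurable lebesgue" "\<And>y. \<bar>w y\<bar> \<le> \<bar>u y\<bar> + \<bar>v y\<bar>"
  shows "(\<integral>\<^sup>+ y. ennreal (\<bar>w y\<bar> powr p) * J y \<partial>lebesgue) \<le>
     ennreal (2 powr p) * ((\<integral>\<^sup>+ y. ennreal (\<bar>u y\<bar> powr p) * J y \<partial>lebesgue)
        + (\<integral>\<^sup>+ y. ennreal (\<bar>v y\<bar> powr p) * J y \<partial>lebesgue))"
proof -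
  have "(\<integral>\<^sup>+ y. ennreal (\<bar>w y\<bar> powr p) * J y \<partial>lebesgue) \<le>
     (\<integral>\<^sup>+ y. ennreal (2 powr p) * (ennreal (\<bar>u y\<bar> powr p) * J y + ennreal (\<bar>v y\<bar> powr p) * J y) \<partial>lebesgue)"
    using pw_enn[OF assms(1) assms(5)] by (intro nn_integral_mono) auto
  also have "\<dots> = ennreal (2 powr p) * ((\<integral>\<^sup>+ y. ennreal (\<bar>u y\<bar> powr p) * J y \<partial>lebesgue)
        + (\<integral>\<^sup>+ y. ennreal (\<bar>v y\<bar> powr p) * J y \<partial>lebesgue))"
    using assms(2-4) by (simp add: nn_integral_cmult nn_integral_add)
  finally show ?thesis .
qed

lemma M_bound:
  fixes u v w :: "'a::euclidean_space \<Rightarrow> real"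
  assumes "p > 0" "u \<in> borel_measurable lebesgue" "v \<in> borel_measurable lebesgue"
    "\<And>y. \<bar>w y\<bar> \<le> \<bar>u y\<bar> + \<bar>v y\<bar>"
  shows "morrey_M p lam w x r \<le> ennreal (2 powr p) * (morrey_M p lam u x r + morrey_M p lam v x r)"
proof -
  have "morrey_M p lam w x r \<le> ennreal (r powr (- lam)) * (ennreal (2 powr p) * ((\<integral>\<^sup>+ y. ennreal (\<bar>u y\<bar> powr p) * indicator (ball x r) y \<partial>lebesgue)
        + (\<integral>\<^sup>+ y. ennreal (\<bar>v y\<bar> powr p) * indicator (ball x r) y \<partial>lebesgue)))"
    unfolding morrey_M_def
    by (intro mult_left_mono int_bound assms borel_measurable_indicator) auto
  thus ?thesis unfolding morrey_M_def by (simp add: algebra_simps)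
qed

lemma A_bound:
  fixes u v w :: "'a::euclidean_space \<Rightarrow> real"
  assumes "p > 0" "u \<in> borel_measurable lebesgue" "v \<in> borel_measurable lebesgue"
    "\<And>y. \<bar>w y\<bar> \<le> \<bar>u y\<bar> + \<bar>v y\<bar>"
  shows "morrey_A p w N \<le> ennreal (2 powr p) * (morrey_A p u N + morrey_A p v N)"
  unfolding morrey_A_def
proof (rule SUP_least)
  fix x :: 'a
  let ?J = "\<lambda>y. indicator (ball x 1) y * indicator (UNIV - ball 0 (real N)) y :: ennreal"
  have "(\<integral>\<^sup>+ y. ennreal (\<bar>w y\<bar> powr p) * indicator (ball x 1) y * indicator (UNIV - ball 0 (real N)) y \<partial>lebesgue)
     = (\<integral>\<^sup>+ y. ennreal (\<bar>w y\<bar> powr p) * ?J y \<partial>lebesgue)" by (simp add: mult.assoc)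
  also have "\<dots> \<le> ennreal (2 powr p) * ((\<integral>\<^sup>+ y. ennreal (\<bar>u y\<bar> powr p) * ?J y \<partial>lebesgue)
        + (\<integral>\<^sup>+ y. ennreal (\<bar>v y\<bar> powr p) * ?J y \<partial>lebesgue))"
  proof (rule int_bound[OF assms(1-3) _ assms(4)])
    have "?J = indicator (ball x 1 \<inter> (UNIV - ball 0 (real N)))"
      by (auto simp: indicator_def fun_eq_iff)
    thus "?J \<in> borel_measurable lebesgue"
      by (simp del: indicator_simps) (intro borel_measurable_indicator, auto)
  qed
  also have "\<dots> \<le> ennreal (2 powr p) * ((SUP x\<in>UNIV. \<integral>\<^sup>+ y. ennreal (\<bar>u y\<bar> powr p) * indicator (ball x 1) y
                        * indicator (UNIV - ball 0 (real N)) y \<partial>lebesgue) + (SUP x\<in>UNIV. \<integral>\<^sup>+ y. ennreal (\<bar>v y\<bar> powr p) * indicator (ball x 1) y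
                        * indicator (UNIV - ball 0 (real N)) y \<partial>lebesgue))"
    by (intro mult_left_mono add_mono SUP_upper2[of x]) (auto simp: mult.assoc)
  finally show "(\<integral>\<^sup>+ y. ennreal (\<bar>w y\<bar> powr p) * indicator (ball x 1) y * indicator (UNIV - ball 0 (real N)) y \<partial>lebesgue)
     \<le> ennreal (2 powr p) * ((SUP x\<in>UNIV. \<integral>\<^sup>+ y. ennreal (\<bar>u y\<bar> powr p) * indicator (ball x 1) y
                        * indicator (UNIV - ball 0 (real N)) y \<partial>lebesgue) + (SUP x\<in>UNIV. \<integral>\<^sup>+ y. ennreal (\<bar>v y\<bar> powr p) * indicator (ball x 1) y
                        * indicator (UNIV - ball 0 (real N)) y \<partial>lebesgue))" .
qed

lemma A_le_sup: "morrey_A p h N \<le> morrey_sup p lam h"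
  unfolding morrey_A_def morrey_sup_def
proof (rule SUP_mono)
  fix x :: 'a
  have "(\<integral>\<^sup>+ y. ennreal (\<bar>h y\<bar> powr p) * indicator (ball x 1) y * indicator (UNIV - ball 0 (real N)) y \<partial>lebesgue)
      \<le> morrey_M p lam h x 1"
    unfolding morrey_M_def by (auto intro!: nn_integral_mono simp: indicator_def)
  also have "\<dots> \<le> (SUP r\<in>{0<..}. morrey_M p lam h x r)" by (rule SUP_upper) auto
  finally show "\<exists>m\<in>UNIV. (\<integral>\<^sup>+ y. ennreal (\<bar>h y\<bar> powr p) * indicator (ball x 1) y * indicator (UNIV - ball 0 (real N)) y \<partial>lebesgue)
      \<le> (SUP r\<in>{0<..}. morrey_M p lam h m r)" by blast
qed

lemma abstract:
  fixes \<psi> :: "'b \<Rightarrow> ennreal"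
  assumes "\<And>k. (\<phi> k \<longlongrightarrow> 0) F" "(e \<longlongrightarrow> 0) sequentially" "C < \<infinity>"
    "\<And>k. \<forall>\<^sub>F t in F. \<psi> t \<le> C * (\<phi> k t + e k)"
  shows "(\<psi> \<longlongrightarrow> 0) F"
proof (rule order_tendstoI)
  fix a :: ennreal assume "a < 0" thus "\<forall>\<^sub>F t in F. a < \<psi> t" by simp
next
  fix a :: ennreal assume a: "0 < a"
  have "((\<lambda>k. C * e k) \<longlongrightarrow> C * 0) sequentially"
    using assms(2,3) by (intro ennreal_tendsto_cmult) auto
  hence "\<forall>\<^sub>F k in sequentially. C * e k < a" using a by (auto dest: order_tendstoD)
  then obtain k where k: "C * e k < a" by (auto simp: eventually_sequentially)
  have "((\<lambda>t. C * (\<phi> k t + e k)) \<longlongrightarrow> C * (0 + e k)) F"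
    using assms(1,3) by (intro ennreal_tendsto_cmult tendsto_add) auto
  hence "\<forall>\<^sub>F t in F. C * (\<phi> k t + e k) < a" using k by (auto dest: order_tendstoD)
  thus "\<forall>\<^sub>F t in F. \<psi> t < a" using assms(4)[of k]
    by eventually_elim (rule le_less_trans)
qed


lemma sup_bound:
  fixes u v w :: "'a::euclidean_space \<Rightarrow> real"
  assumes "p > 0" "u \<in> borel_measurable lebesgue" "v \<in> borel_measurable lebesgue"
    "\<And>y. \<bar>w y\<bar> \<le> \<bar>u y\<bar> + \<bar>v y\<bar>"
  shows "morrey_sup p lam w \<le> ennreal (2 powr p) * (morrey_sup p lam u + morrey_sup p lam v)"
  unfolding morrey_sup_def
proof (intro SUP_least)
  fix x r assume r: "r \<in> {0::real<..}"
  have "morrey_M p lam w x r \<le> ennreal (2 powr p) * (morrey_M p lam u x r + morrey_M p lam v x r)"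
    by (rule M_bound[OF assms])
  also have "\<dots> \<le> ennreal (2 powr p) * ((SUP x\<in>UNIV. SUP r\<in>{0<..}. morrey_M p lam u x r) + (SUP x\<in>UNIV. SUP r\<in>{0<..}. morrey_M p lam v x r))"
    using r by (intro mult_left_mono add_mono SUP_upper2[of x] SUP_upper) auto
  finally show "morrey_M p lam w x r \<le> ennreal (2 powr p) * ((SUP x\<in>UNIV. SUP r\<in>{0<..}. morrey_M p lam u x r) + (SUP x\<in>UNIV. SUP r\<in>{0<..}. morrey_M p lam v x r))" .
qed

lemma supx_bound:
  fixes u v w :: "'a::euclidean_space \<Rightarrow> real"
  assumes "p > 0" "u \<in> borel_measurable lebesgue" "v \<in> borel_measurable lebesgue"
    "\<And>y. \<bar>w y\<bar> \<le> \<bar>u y\<bar> + \<bar>v y\<bar>" "r > 0"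
  shows "(SUP x\<in>UNIV. morrey_M p lam w x r) \<le> ennreal (2 powr p) * ((SUP x\<in>UNIV. morrey_M p lam u x r) + morrey_sup p lam v)"
proof (intro SUP_least)
  fix x
  have "morrey_M p lam w x r \<le> ennreal (2 powr p) * (morrey_M p lam u x r + morrey_M p lam v x r)"
    by (rule M_bound[OF assms(1-4)])
  also have "\<dots> \<le> ennreal (2 powr p) * ((SUP x\<in>UNIV. morrey_M p lam u x r) + morrey_sup p lam v)"
    unfolding morrey_sup_def
    using assms(5) by (intro mult_left_mono add_mono SUP_upper2[of x] SUP_upper) auto
  finally show "morrey_M p lam w x r \<le> ennreal (2 powr p) * ((SUP x\<in>UNIV. morrey_M p lam u x r) + morrey_sup p lam v)" .
qed

lemma err_tendsto:
  fixes g :: "nat \<Rightarrow> 'a::euclidean_space \<Rightarrow> real"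
  assumes p: "p \<ge> 1" and g: "\<And>k. g k \<in> morrey_space p lam" and f: "f \<in> morrey_space p lam"
    and lim: "((\<lambda>k. morrey_norm p lam (\<lambda>y. g k y - f y)) \<longlongrightarrow> 0) sequentially"
  shows "((\<lambda>k. morrey_sup p lam (\<lambda>y. g k y - f y)) \<longlongrightarrow> 0) sequentially"
proof -
  let ?e = "\<lambda>k. morrey_sup p lam (\<lambda>y. g k y - f y)"
  have fin: "?e k < \<infinity>" for k
  proof -
    have "?e k \<le> ennreal (2 powr p) * (morrey_sup p lam (g k) + morrey_sup p lam f)"
      using p g[of k] f by (intro sup_bound) (auto simp: morrey_space_def)
    also have "\<dots> < \<infinity>" using g[of k] f
      by (auto simp: morrey_space_def ennreal_mult_less_top)
    finally show ?thesis .
  qed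
  have eq: "enn2real (?e k) = morrey_norm p lam (\<lambda>y. g k y - f y) powr p" for k
  proof -
    have "enn2real (?e k) \<ge> 0" by simp
    thus ?thesis using p unfolding morrey_norm_def
      by (cases "enn2real (?e k) = 0") (auto simp: powr_powr)
  qed
  have "((\<lambda>k. morrey_norm p lam (\<lambda>y. g k y - f y) powr p) \<longlongrightarrow> 0) sequentially"
    using p lim by (intro tendsto_zero_powrI) (auto simp: morrey_norm_def)
  hence "((\<lambda>k. enn2real (?e k)) \<longlongrightarrow> 0) sequentially" by (simp add: eq)
  hence "((\<lambda>k. ennreal (enn2real (?e k))) \<longlongrightarrow> ennreal 0) sequentially" by (rule tendsto_ennrealI)
  moreover have "ennreal (enn2real (?e k)) = ?e k" for k using fin[of k] by simp
  ultimately show ?thesis by simp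
qed

theorem lemma3p7:
  fixes p lam :: real
  assumes "0 \<le> lam" and "lam < real DIM('a::euclidean_space)" and "1 \<le> p"
  shows "morrey_closed p lam (V0_morrey p lam :: ('a \<Rightarrow> real) set)
       \<and> morrey_closed p lam (Vinf_morrey p lam :: ('a \<Rightarrow> real) set)
       \<and> morrey_closed p lam (Vstar_morrey p lam :: ('a \<Rightarrow> real) set)
       \<and> morrey_closed p lam (V0inf_star_morrey p lam :: ('a \<Rightarrow> real) set)"
proof -
  have p0: "p > 0" using assms(3) by simp
  let ?C = "ennreal (2 powr p)"
  have C: "?C < \<infinity>" by simp
  have common: "f \<in> borel_measurable lebesgue \<and> (\<forall>k. g k \<in> borel_measurable lebesgue) \<and>
      ((\<lambda>k. morrey_sup p lam (\<lambda>y. g k y - f y)) \<longlongrightarrow> 0) sequentially"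
    if g: "\<And>k. g k \<in> morrey_space p lam" and f: "f \<in> morrey_space p lam"
      and lim: "((\<lambda>k. morrey_norm p lam (\<lambda>y. g k y - (f::'a\<Rightarrow>real) y)) \<longlongrightarrow> 0) sequentially" for g f
    using err_tendsto[OF assms(3) g f lim] g f by (auto simp: morrey_space_def)
  have tri: "\<And>a b :: real. \<bar>a\<bar> \<le> \<bar>b\<bar> + \<bar>b - a\<bar>" by simp
  have c1: "morrey_closed p lam (V0_morrey p lam :: ('a \<Rightarrow> real) set)"
    unfolding morrey_closed_def
  proof (intro allI impI, elim conjE)
    fix g :: "nat \<Rightarrow> 'a \<Rightarrow> real" and f
    assume g: "\<forall>k. g k \<in> V0_morrey p lam" and f: "f \<in> morrey_space p lam"
      and lim: "((\<lambda>k. morrey_norm p lam (\<lambda>y. g k y - f y)) \<longlongrightarrow> 0) sequentially"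
    have gm: "\<And>k. g k \<in> morrey_space p lam" using g by (auto simp: V0_morrey_def)
    note cm = common[OF gm f lim]
    have "((\<lambda>r. SUP x\<in>UNIV. morrey_M p lam f x r) \<longlongrightarrow> 0) (at_right 0)"
    proof (rule abstract[OF _ conjunct2[OF conjunct2[OF cm]] C])
      fix k show "((\<lambda>r. SUP x\<in>UNIV. morrey_M p lam (g k) x r) \<longlongrightarrow> 0) (at_right 0)"
        using g by (auto simp: V0_morrey_def)
      show "\<forall>\<^sub>F r in at_right 0. (SUP x\<in>UNIV. morrey_M p lam f x r) \<le> ?C * ((SUP x\<in>UNIV. morrey_M p lam (g k) x r) + morrey_sup p lam (\<lambda>y. g k y - f y))"
        using eventually_at_right_less[of "0::real"]
      proof eventually_elim
        case (elim r) thus ?case using cm tri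
          by (intro supx_bound p0) (auto intro: borel_measurable_diff)
      qed
    qed
    thus "f \<in> V0_morrey p lam" using f by (simp add: V0_morrey_def)
  qed
  have c2: "morrey_closed p lam (Vinf_morrey p lam :: ('a \<Rightarrow> real) set)"
    unfolding morrey_closed_def
  proof (intro allI impI, elim conjE)
    fix g :: "nat \<Rightarrow> 'a \<Rightarrow> real" and f
    assume g: "\<forall>k. g k \<in> Vinf_morrey p lam" and f: "f \<in> morrey_space p lam"
      and lim: "((\<lambda>k. morrey_norm p lam (\<lambda>y. g k y - f y)) \<longlongrightarrow> 0) sequentially"
    have gm: "\<And>k. g k \<in> morrey_space p lam" using g by (auto simp: Vinf_morrey_def)
    note cm = common[OF gm f lim]
    have "((\<lambda>r. SUP x\<in>UNIV. morrey_M p lam f x r) \<longlongrightarrow> 0) at_top"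
    proof (rule abstract[OF _ conjunct2[OF conjunct2[OF cm]] C])
      fix k show "((\<lambda>r. SUP x\<in>UNIV. morrey_M p lam (g k) x r) \<longlongrightarrow> 0) at_top"
        using g by (auto simp: Vinf_morrey_def)
      show "\<forall>\<^sub>F r in at_top. (SUP x\<in>UNIV. morrey_M p lam f x r) \<le> ?C * ((SUP x\<in>UNIV. morrey_M p lam (g k) x r) + morrey_sup p lam (\<lambda>y. g k y - f y))"
        using eventually_gt_at_top[of "0::real"]
      proof eventually_elim
        case (elim r) thus ?case using cm tri
          by (intro supx_bound p0) (auto intro: borel_measurable_diff)
      qed
    qed
    thus "f \<in> Vinf_morrey p lam" using f by (simp add: Vinf_morrey_def)
  qed
  have c3: "morrey_closed p lam (Vstar_morrey p lam :: ('a \<Rightarrow> real) set)"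
    unfolding morrey_closed_def
  proof (intro allI impI, elim conjE)
    fix g :: "nat \<Rightarrow> 'a \<Rightarrow> real" and f
    assume g: "\<forall>k. g k \<in> Vstar_morrey p lam" and f: "f \<in> morrey_space p lam"
      and lim: "((\<lambda>k. morrey_norm p lam (\<lambda>y. g k y - f y)) \<longlongrightarrow> 0) sequentially"
    have gm: "\<And>k. g k \<in> morrey_space p lam" using g by (auto simp: Vstar_morrey_def)
    note cm = common[OF gm f lim]
    have "(morrey_A p f \<longlongrightarrow> 0) sequentially"
    proof (rule abstract[OF _ conjunct2[OF conjunct2[OF cm]] C])
      fix k show "(morrey_A p (g k) \<longlongrightarrow> 0) sequentially"
        using g by (auto simp: Vstar_morrey_def)
      show "\<forall>\<^sub>F N in sequentially. morrey_A p f N \<le> ?C * (morrey_A p (g k) N + morrey_sup p lam (\<lambda>y. g k y - f y))"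
      proof (intro always_eventually allI)
        fix N
        have "morrey_A p f N \<le> ?C * (morrey_A p (g k) N + morrey_A p (\<lambda>y. g k y - f y) N)"
          using cm tri by (intro A_bound p0) (auto intro: borel_measurable_diff)
        also have "\<dots> \<le> ?C * (morrey_A p (g k) N + morrey_sup p lam (\<lambda>y. g k y - f y))"
          by (intro mult_left_mono add_mono A_le_sup) auto
        finally show "morrey_A p f N \<le> ?C * (morrey_A p (g k) N + morrey_sup p lam (\<lambda>y. g k y - f y))" .
      qed
    qed
    thus "f \<in> Vstar_morrey p lam" using f by (simp add: Vstar_morrey_def)
  qed
  have c4: "morrey_closed p lam (V0inf_star_morrey p lam :: ('a \<Rightarrow> real) set)"
    using c1 c2 c3 unfolding morrey_closed_def V0inf_star_morrey_def by blast
  show ?thesis using c1 c2 c3 c4 by blast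
qed

end
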